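(* Let $\Omega\subset\mathbb{R}^2$ be a convex polygon and $\Gamma$ a $C^2$ curve in $\Omega$ (the interface). Assume $\mathcal U_h$ is a quasi-uniform triangulation of $\Omega$ satisfying $Minac(\alpha)$, and $\mathcal F_h$ is the interface-fitted mesh generated from $\mathcal U_h$. Then there exist $N_\alpha\in\mathbb{R}$ and $\psi_\alpha\in(0,\pi)$ depending only on $\alpha$ such that every triangle $T\in\mathcal F_h$ satisfies $Maxac(\psi_\alpha)$ and every quadrilateral $K\in\mathcal F_h$ satisfies $RDP(N_\alpha,\psi_\alpha)$.
   Context: A triangle or quadrilateral satisfies $Minac(\alpha)$ if all its angles are $\ge\alpha$, and $Maxac(\psi)$ if all its angles are $\le\psi$; a mesh satisfies $Minac(\alpha)$ if all its elements do. A convex quadrilateral $K$ satisfies $RDP(N,\psi)$ if it can be divided along one of its diagonals $d_1$ into two triangles such that $|d_2|/|d_1|\le N$ ($d_2$ the other diagonal) and both triangles satisfy $Maxac(\psi)$. Interface-fitted mesh: for each triangle of $\mathcal U_h$ whose intersection with $\Gamma$ has positive length, $\Gamma$ crosses two of its edges; connecting successively the intersection points of $\Gamma$ with the edges of $\mathcal U_h$ by straight segments cuts each such triangle into a triangle and a quadrilateral; $\mathcal F_h$ consists of these pieces together with the triangles of $\mathcal U_h$ not crossed by $\Gamma$. *)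

theory Defs
  imports "HOL-Analysis.Analysis"
begin

type_synonym pt = "real^2"

definition ang :: "pt \<Rightarrow> pt \<Rightarrow> pt \<Rightarrow> real" where
  "ang a b c = arccos (((a - b) \<bullet> (c - b)) / (norm (a - b) * norm (c - b)))"

definition tri_angles :: "pt set \<Rightarrow> real set" where
  "tri_angles V = {ang a b c | a b c. V = {a, b, c} \<and> a \<noteq> b \<and> b \<noteq> c \<and> a \<noteq> c}"

definition nondeg_tri :: "pt set \<Rightarrow> bool" where
  "nondeg_tri V \<longleftrightarrow> card V = 3 \<and> \<not> collinear V"

definition Minac_tri :: "real \<Rightarrow> pt set \<Rightarrow> bool" where
  "Minac_tri \<alpha> V \<longleftrightarrow> (\<forall>\<theta>\<in>tri_angles V. \<alpha> \<le> \<theta>)"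

definition Maxac_tri :: "real \<Rightarrow> pt set \<Rightarrow> bool" where
  "Maxac_tri \<psi> V \<longleftrightarrow> (\<forall>\<theta>\<in>tri_angles V. \<theta> \<le> \<psi>)"

text \<open>Convex (non-degenerate) quadrilateral with vertices a,b,c,d in cyclic order.\<close>
definition convex_quad :: "pt \<Rightarrow> pt \<Rightarrow> pt \<Rightarrow> pt \<Rightarrow> bool" where
  "convex_quad a b c d \<longleftrightarrow>
     \<not> collinear {a, b, c} \<and> \<not> collinear {b, c, d} \<and> \<not> collinear {c, d, a} \<and> \<not> collinear {d, a, b} \<and>
     open_segment a c \<inter> open_segment b d \<noteq> {}"

text \<open>RDP(N,psi) for the convex quadrilateral a b c d (cyclic order): split along a
  diagonal d1 into two triangles satisfying Maxac(psi), with |d2|/|d1| <= N.\<close>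
definition RDP :: "real \<Rightarrow> real \<Rightarrow> pt \<Rightarrow> pt \<Rightarrow> pt \<Rightarrow> pt \<Rightarrow> bool" where
  "RDP N \<psi> a b c d \<longleftrightarrow> convex_quad a b c d \<and>
     ((dist b d / dist a c \<le> N \<and> Maxac_tri \<psi> {a, b, c} \<and> Maxac_tri \<psi> {a, c, d}) \<or>
      (dist a c / dist b d \<le> N \<and> Maxac_tri \<psi> {b, c, d} \<and> Maxac_tri \<psi> {b, d, a}))"

definition convex_polygon :: "pt set \<Rightarrow> bool" where
  "convex_polygon \<Omega> \<longleftrightarrow> (\<exists>P. finite P \<and> \<Omega> = convex hull P) \<and> interior \<Omega> \<noteq> {}"

definition triangulation :: "pt set \<Rightarrow> pt set set \<Rightarrow> bool" where
  "triangulation \<Omega> U \<longleftrightarrow> finite U \<and> (\<forall>V\<in>U. nondeg_tri V) \<and>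
     \<Union>((\<lambda>V. convex hull V) ` U) = \<Omega> \<and>
     (\<forall>V1\<in>U. \<forall>V2\<in>U. V1 \<noteq> V2 \<longrightarrow> convex hull V1 \<inter> convex hull V2 = convex hull (V1 \<inter> V2))"

definition Minac_mesh :: "real \<Rightarrow> pt set set \<Rightarrow> bool" where
  "Minac_mesh \<alpha> U \<longleftrightarrow> (\<forall>V\<in>U. Minac_tri \<alpha> V)"

definition C2_curve :: "(real \<Rightarrow> pt) \<Rightarrow> bool" where
  "C2_curve \<gamma> \<longleftrightarrow> (\<exists>\<gamma>1 \<gamma>2.
     (\<forall>t\<in>{0..1}. (\<gamma> has_vector_derivative \<gamma>1 t) (at t within {0..1}) \<and>
                  (\<gamma>1 has_vector_derivative \<gamma>2 t) (at t within {0..1})) \<and>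
     continuous_on {0..1} \<gamma>2)"

definition length_in :: "(real \<Rightarrow> pt) \<Rightarrow> pt set \<Rightarrow> real" where
  "length_in \<gamma> S = integral {t\<in>{0..1}. \<gamma> t \<in> S} (\<lambda>t. norm (vector_derivative \<gamma> (at t within {0..1})))"

definition crossed :: "(real \<Rightarrow> pt) \<Rightarrow> pt set \<Rightarrow> bool" where
  "crossed \<gamma> V \<longleftrightarrow> length_in \<gamma> (convex hull V) > 0"

text \<open>Standing assumption: Gamma crosses two edges of each crossed triangle (at interior
  points of the edges; these are the only points of Gamma on the triangle boundary).\<close>
definition cuts_two_edges :: "(real \<Rightarrow> pt) \<Rightarrow> pt set \<Rightarrow> bool" where
  "cuts_two_edges \<gamma> V \<longleftrightarrow> (\<exists>a b c p q. V = {a, b, c} \<and> p \<in> open_segment a b \<and> q \<in> open_segment a c \<and>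
      path_image \<gamma> \<inter> frontier (convex hull V) = {p, q})"

text \<open>Elements of the interface-fitted mesh, as vertex lists in cyclic order.\<close>
definition fitted_mesh :: "(real \<Rightarrow> pt) \<Rightarrow> pt set set \<Rightarrow> pt list set" where
  "fitted_mesh \<gamma> U =
     {[a, b, c] | a b c. {a, b, c} \<in> U \<and> \<not> crossed \<gamma> {a, b, c}} \<union>
     (\<Union>V\<in>{V\<in>U. crossed \<gamma> V}.
        \<Union>{{[a, p, q], [p, b, c, q]} | a b c p q. V = {a, b, c} \<and> p \<in> open_segment a b \<and>
             q \<in> open_segment a c \<and> path_image \<gamma> \<inter> frontier (convex hull V) = {p, q}})"

end

theory Submission imports Defs begin

lemma inner2: "(x::pt) \<bullet> y = x$1*y$1 + x$2*y$2"
  by (simp add: inner_vec_def sum_2)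
lemma norm2: "(norm (x::pt))^2 = x$1^2 + x$2^2"
  using power2_norm_eq_inner[of x] inner2[of x x] by (simp add: power2_eq_square)

definition cr :: "pt \<Rightarrow> pt \<Rightarrow> real" where "cr u v = u $ 1 * v $ 2 - u $ 2 * v $ 1"

lemma lagr: "(u \<bullet> v)^2 + (cr u v)^2 = (norm u)^2 * (norm v)^2"
  unfolding norm2 inner2 cr_def by (simp add: power2_eq_square algebra_simps)

lemma cr_bound: "\<bar>cr u v\<bar> \<le> norm u * norm v"
proof -
  have "0 \<le> (u \<bullet> v)^2" by simp
  then have "(cr u v)^2 \<le> (norm u * norm v)^2"
    using lagr[of u v] unfolding power_mult_distrib by linarith
  then have "\<bar>cr u v\<bar>^2 \<le> (norm u * norm v)^2" by simp
  then show ?thesis by (rule power2_le_imp_le) simp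
qed

lemma cr_scaleL: "cr (k *\<^sub>R u) w = k * cr u w" by (simp add: cr_def algebra_simps)
lemma cr_scaleR: "cr u (k *\<^sub>R w) = k * cr u w" by (simp add: cr_def algebra_simps)
lemma cr_diffL: "cr (u - v) w = cr u w - cr v w" by (simp add: cr_def algebra_simps)
lemma cr_diffR: "cr w (u - v) = cr w u - cr w v" by (simp add: cr_def algebra_simps)
lemma cr_addL: "cr (u + v) w = cr u w + cr v w" by (simp add: cr_def algebra_simps)
lemma cr_addR: "cr w (u + v) = cr w u + cr w v" by (simp add: cr_def algebra_simps)
lemma cr_minusL: "cr (- u) w = - cr u w" by (simp add: cr_def algebra_simps)
lemma cr_minusR: "cr w (- u) = - cr w u" by (simp add: cr_def algebra_simps)
lemma cr_self: "cr u u = 0" by (simp add: cr_def algebra_simps)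
lemmas cr_simps = cr_scaleL cr_scaleR cr_diffL cr_diffR cr_addL cr_addR cr_minusL cr_minusR cr_self

lemma cr_anti: "cr v u = - cr u v" by (simp add: cr_def algebra_simps)

lemma cr_distinct: assumes "cr (y-x) (z-x) \<noteq> 0" shows "x \<noteq> y" "x \<noteq> z" "y \<noteq> z"
  using assms by (auto simp: cr_def)

lemma ncol: assumes "cr (y-x) (z-x) \<noteq> 0" shows "\<not> collinear {x,y,z}"
proof
  assume "collinear {x,y,z}"
  then obtain w where w: "\<forall>p\<in>{x,y,z}. \<forall>q\<in>{x,y,z}. \<exists>c. p - q = c *\<^sub>R w"
    unfolding collinear_def by blast
  then obtain c1 c2 where "y - x = c1 *\<^sub>R w" "z - x = c2 *\<^sub>R w" by blast
  then have "cr (y-x) (z-x) = 0" by (simp add: cr_simps)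
  with assms show False by simp
qed

definition sinb :: "real \<Rightarrow> pt \<Rightarrow> pt \<Rightarrow> pt \<Rightarrow> bool" where
  "sinb m x y z \<longleftrightarrow> m * (norm (y-x))^2 * (norm (z-x))^2 \<le> (cr (y-x) (z-x))^2"

lemma sinb_sym: "sinb m x y z = sinb m x z y"
proof -
  have "cr (z-x) (y-x) = - cr (y-x) (z-x)" by (rule cr_anti)
  then show ?thesis unfolding sinb_def by (simp add: mult_ac)
qed

lemma sinb_mono: assumes "m' \<le> m" "sinb m x y z" shows "sinb m' x y z"
proof -
  have "m' * (norm (y-x))^2 * (norm (z-x))^2 \<le> m * (norm (y-x))^2 * (norm (z-x))^2"
    using assms(1) by (intro mult_right_mono) auto
  then show ?thesis using assms(2) unfolding sinb_def by linarith
qed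

lemma sinb_scale: assumes "sinb m x y z" "y' - x = k *\<^sub>R (y - x)" "z' - x = l *\<^sub>R (z - x)"
  shows "sinb m x y' z'"
proof -
  have c: "cr (y'-x) (z'-x) = (k*l) * cr (y-x) (z-x)" using assms(2,3) by (simp add: cr_scaleL cr_scaleR)
  have n1: "(norm (y'-x))^2 = k^2 * (norm (y-x))^2" using assms(2) by (simp add: power_mult_distrib)
  have n2: "(norm (z'-x))^2 = l^2 * (norm (z-x))^2" using assms(3) by (simp add: power_mult_distrib)
  have "m * (norm (y'-x))^2 * (norm (z'-x))^2 = (k*l)^2 * (m * (norm (y-x))^2 * (norm (z-x))^2)"
    unfolding n1 n2 by (simp add: power_mult_distrib)
  also have "\<dots> \<le> (k*l)^2 * (cr (y-x) (z-x))^2" using assms(1) unfolding sinb_def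
    by (intro mult_left_mono) auto
  also have "\<dots> = (cr (y'-x) (z'-x))^2" unfolding c by (simp add: power_mult_distrib)
  finally show ?thesis unfolding sinb_def .
qed

lemma L1: assumes "(y-x) \<bullet> (z-x) \<le> 0" "sinb m y x z" "0 \<le> m" shows "sinb m x y z"
proof -
  have c: "cr (x-y) (z-y) = - cr (y-x) (z-x)" by (simp add: cr_def algebra_simps)
  have n: "(norm (z-y))^2 = (norm (z-x))^2 + (norm (y-x))^2 - 2*((y-x) \<bullet> (z-x))"
    unfolding norm2 inner2 by (simp add: power2_eq_square algebra_simps)
  have "0 \<le> (norm (y-x))^2" by simp
  then have le: "(norm (z-x))^2 \<le> (norm (z-y))^2" using n assms(1) by linarith
  have "m * (norm (y-x))^2 * (norm (z-x))^2 \<le> m * (norm (y-x))^2 * (norm (z-y))^2"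
    using le assms(3) by (intro mult_left_mono) auto
  also have "\<dots> \<le> (cr (x-y) (z-y))^2" using assms(2) unfolding sinb_def
    by (simp add: norm_minus_commute)
  finally show ?thesis unfolding sinb_def c by simp
qed

lemma apex: assumes "sinb m x y z" "norm (y-x) \<le> norm (z-x)" "0 \<le> m"
  shows "sinb (m/4) y x z"
proof -
  have c: "cr (x-y) (z-y) = - cr (y-x) (z-x)" by (simp add: cr_def algebra_simps)
  have "norm (z-y) \<le> norm (z-x) + norm (y-x)"
    using norm_triangle_ineq[of "z-x" "x-y"] by (simp add: norm_minus_commute)
  then have "norm (z-y) \<le> 2 * norm (z-x)" using assms(2) by simp
  then have "(norm (z-y))^2 \<le> (2 * norm (z-x))^2" by (intro power_mono) auto
  then have "(norm (z-y))^2 \<le> 4 * (norm (z-x))^2" by (simp add: power_mult_distrib)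
  then have "(m/4) * (norm (y-x))^2 * (norm (z-y))^2 \<le> (m/4) * (norm (y-x))^2 * (4 * (norm (z-x))^2)"
    using assms(3) by (intro mult_left_mono) auto
  then have "(m/4) * (norm (x-y))^2 * (norm (z-y))^2 \<le> (m/4) * (norm (y-x))^2 * (4 * (norm (z-x))^2)"
    by (simp add: norm_minus_commute)
  also have "\<dots> = m * (norm (y-x))^2 * (norm (z-x))^2" by simp
  also have "\<dots> \<le> (cr (x-y) (z-y))^2" using assms(1) unfolding sinb_def c by simp
  finally show ?thesis unfolding sinb_def .
qed

lemma good_ang: assumes "0 < m" "m \<le> 1" "0 \<le> (y-x) \<bullet> (z-x) \<or> sinb m x y z"
  shows "ang y x z \<le> pi - arccos (sqrt (1-m))"
proof -
  define r where "r = sqrt (1-m)"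
  have r0: "0 \<le> r" "r \<le> 1" using assms by (auto simp: r_def)
  define c where "c = (y-x) \<bullet> (z-x)"
  define n where "n = norm (y-x) * norm (z-x)"
  have cn: "\<bar>c\<bar> \<le> n" unfolding c_def n_def by (rule Cauchy_Schwarz_ineq2)
  have ang: "ang y x z = arccos (c / n)" unfolding ang_def c_def n_def ..
  have b1: "-1 \<le> c/n \<and> c/n \<le> 1"
  proof (cases "n = 0")
    case True then show ?thesis by simp
  next
    case False
    then have np: "n > 0" using cn by linarith
    have "-n \<le> c" "c \<le> n" using cn by linarith+
    then show ?thesis using np by (simp add: pos_le_divide_eq pos_divide_le_eq)
  qed
  have lb: "-r \<le> c/n"
  proof (cases "n = 0 \<or> 0 \<le> c")
    case True
    have "0 \<le> c/n" using True cn by (auto intro!: divide_nonneg_nonneg)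
    then show ?thesis using r0 by linarith
  next
    case False
    then have np: "n > 0" "c < 0" using cn by auto
    then have sb: "sinb m x y z" using assms(3) c_def by auto
    have l: "c^2 + (cr (y-x) (z-x))^2 = n^2" unfolding c_def n_def using lagr by (simp add: power_mult_distrib)
    have "m * n^2 \<le> (cr (y-x) (z-x))^2" using sb unfolding sinb_def n_def by (simp add: power_mult_distrib)
    moreover have "(1-m) * n^2 = n^2 - m * n^2" by (simp add: algebra_simps)
    ultimately have "c^2 \<le> (1-m) * n^2" using l by linarith
    also have "\<dots> = (r * n)^2" using assms by (simp add: r_def power_mult_distrib)
    finally have "\<bar>c\<bar>^2 \<le> (r * n)^2" by simp
    moreover have "0 \<le> r * n" using r0 np by simp
    ultimately have "\<bar>c\<bar> \<le> r * n" by (rule power2_le_imp_le)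
    then have "- r * n \<le> c" by linarith
    then show ?thesis using np by (simp add: pos_le_divide_eq)
  qed
  have "arccos (c/n) \<le> arccos (-r)" using lb b1 r0 by (intro arccos_le_arccos) auto
  also have "\<dots> = pi - arccos r" using r0 by (simp add: arccos_minus)
  finally show ?thesis unfolding ang r_def .
qed

lemma maxac: assumes "0 < m" "m \<le> 1" "sinb m a b c" "a \<noteq> b" "a \<noteq> c" "b \<noteq> c"
  shows "Maxac_tri (pi - arccos (sqrt (1-m))) {a,b,c}"
proof -
  define G where "G x y z \<longleftrightarrow> (0 \<le> (y-x) \<bullet> (z-x) \<or> sinb m x y z)" for x y z
  have Gs: "G x y z \<Longrightarrow> G x z y" for x y z unfolding G_def using sinb_sym by (auto simp: inner_commute)
  have g1: "G a b c" using assms unfolding G_def by auto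
  have g2: "G b a c"
  proof (cases "0 \<le> (a-b) \<bullet> (c-b)")
    case False then show ?thesis unfolding G_def using L1[where x=b and y=a and z=c and m=m] assms by auto
  qed (auto simp: G_def)
  have g3: "G c a b"
  proof (cases "0 \<le> (a-c) \<bullet> (b-c)")
    case False then show ?thesis unfolding G_def using L1[where x=c and y=a and z=b and m=m] assms sinb_sym by auto
  qed (auto simp: G_def)
  note gs = g1 g2 g3 Gs[OF g1] Gs[OF g2] Gs[OF g3]
  show ?thesis unfolding Maxac_tri_def tri_angles_def
  proof safe
    fix x y z assume h: "{a,b,c} = {x,y,z}" "x \<noteq> y" "y \<noteq> z" "x \<noteq> z"
    have m: "x = a \<or> x = b \<or> x = c" "y = a \<or> y = b \<or> y = c" "z = a \<or> z = b \<or> z = c"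
      using h(1) by (metis insertCI insertE singletonD)+
    have "G y x z" using m h(2-4) gs by (elim disjE) simp_all
    then show "ang x y z \<le> pi - arccos (sqrt (1 - m))" using good_ang[OF assms(1,2)] unfolding G_def by blast
  qed
qed

lemma acute_sinb: assumes "0 \<le> (y-x) \<bullet> (z-x)" "\<beta> \<le> ang y x z" "0 \<le> \<beta>" "\<beta> \<le> pi" "x \<noteq> y" "x \<noteq> z"
  shows "sinb ((sin \<beta>)^2) x y z"
proof -
  define c where "c = (y-x) \<bullet> (z-x)"
  define n where "n = norm (y-x) * norm (z-x)"
  have np: "n > 0" unfolding n_def using assms by auto
  have cn: "\<bar>c\<bar> \<le> n" unfolding c_def n_def by (rule Cauchy_Schwarz_ineq2)
  have ang: "ang y x z = arccos (c / n)" unfolding ang_def c_def n_def ..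
  have "-n \<le> c" "c \<le> n" using cn by linarith+
  then have b1: "-1 \<le> c/n" "c/n \<le> 1" using np by (simp_all add: pos_le_divide_eq pos_divide_le_eq)
  have "cos (arccos (c/n)) \<le> cos \<beta>"
    using assms(2,3) b1 arccos_ubound[of "c/n"] unfolding ang by (intro cos_monotone_0_pi_le) auto
  then have "c/n \<le> cos \<beta>" using b1 by (simp add: cos_arccos)
  then have "c \<le> cos \<beta> * n" using np by (simp add: pos_divide_le_eq)
  then have "c^2 \<le> (cos \<beta> * n)^2" using assms(1) c_def by (intro power_mono) auto
  moreover have l: "c^2 + (cr (y-x) (z-x))^2 = n^2" unfolding c_def n_def using lagr by (simp add: power_mult_distrib)
  ultimately have "(sin \<beta>)^2 * n^2 \<le> (cr (y-x) (z-x))^2"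
    by (simp add: sin_squared_eq power_mult_distrib algebra_simps)
  then show ?thesis unfolding sinb_def n_def by (simp add: power_mult_distrib mult.assoc)
qed

lemma maxac': assumes "0 < m" "m \<le> 1" "sinb m x y z" "cr (y-x) (z-x) \<noteq> 0"
  shows "Maxac_tri (pi - arccos (sqrt (1-m))) {x,y,z}"
  using maxac[OF assms(1-3)] cr_distinct[OF assms(4)] by blast

lemma tri_mem: assumes "{a,b,c} = {x,y,z}" "x \<noteq> y" "y \<noteq> z" "x \<noteq> z"
  shows "ang x y z \<in> tri_angles {a,b,c}"
  unfolding tri_angles_def using assms by blast

lemma minac_sinb: assumes "Minac_tri \<alpha> {a,b,c}" "a \<noteq> b" "a \<noteq> c" "b \<noteq> c" "0 < \<beta>" "\<beta> \<le> \<alpha>" "\<beta> \<le> pi"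
  shows "sinb ((sin \<beta>)^2) a b c"
proof -
  have "ang b a c \<in> tri_angles {a,b,c}" by (rule tri_mem) (use assms in auto)
  then have A: "\<beta> \<le> ang b a c" using assms(1,6) unfolding Minac_tri_def by force
  have "ang a b c \<in> tri_angles {a,b,c}" by (rule tri_mem) (use assms in auto)
  then have B: "\<beta> \<le> ang a b c" using assms(1,6) unfolding Minac_tri_def by force
  show ?thesis
  proof (cases "0 \<le> (b-a) \<bullet> (c-a)")
    case True
    then show ?thesis using acute_sinb[where x=a and y=b and z=c] A assms by auto
  next
    case False
    have e: "(b-a) \<bullet> (c-a) + (a-b) \<bullet> (c-b) = (norm (b-a))^2"
      unfolding inner2 norm2 by (simp add: power2_eq_square algebra_simps)
    have "(norm (b-a))^2 > 0" using assms(2) by simp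
    then have "0 \<le> (a-b) \<bullet> (c-b)" using e False by linarith
    then have "sinb ((sin \<beta>)^2) b a c" using acute_sinb[where x=b and y=a and z=c] B assms by auto
    then show ?thesis using L1[where x=a and y=b and z=c] False by auto
  qed
qed

lemma sinb_abs: assumes "sinb (\<sigma>^2) x y z" "0 \<le> \<sigma>"
  shows "\<sigma> * norm (y-x) * norm (z-x) \<le> \<bar>cr (y-x) (z-x)\<bar>"
proof -
  have "(\<sigma> * norm (y-x) * norm (z-x))^2 \<le> \<bar>cr (y-x) (z-x)\<bar>^2"
    using assms(1) unfolding sinb_def by (simp add: power_mult_distrib)
  then show ?thesis by (rule power2_le_imp_le) simp
qed

lemma ratio_lemma: fixes \<sigma> U V X Y :: real
  assumes "0 < \<sigma>" "\<sigma> * U \<le> V" "X \<le> U + V" "\<sigma> * V \<le> Y" "0 < Y"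
  shows "X / Y \<le> (1+\<sigma>)/\<sigma>^2"
proof -
  have s2: "0 < \<sigma>^2" using assms by simp
  have 1: "\<sigma>^2 * X \<le> \<sigma>^2*U + \<sigma>^2*V" using mult_left_mono[OF assms(3), of "\<sigma>^2"] by (simp add: algebra_simps)
  have 2: "\<sigma>^2*U \<le> \<sigma>*V" using mult_left_mono[OF assms(2), of \<sigma>] assms(1) by (simp add: power2_eq_square mult.assoc)
  have 3: "\<sigma>^2 * V + \<sigma>*V = (1+\<sigma>)*(\<sigma>*V)" by (simp add: algebra_simps power2_eq_square)
  have 4: "(1+\<sigma>)*(\<sigma>*V) \<le> (1+\<sigma>)*Y" using assms by (intro mult_left_mono) auto
  have "\<sigma>^2 * X \<le> (1+\<sigma>)*Y" using 1 2 3 4 by linarith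
  then have "X \<le> ((1+\<sigma>)*Y) / \<sigma>^2" using s2 by (simp add: pos_le_divide_eq mult.commute)
  then have "X \<le> (1+\<sigma>)/\<sigma>^2 * Y" by simp
  then show ?thesis using assms(5) by (simp add: pos_divide_le_eq)
qed

lemma geo:
  fixes a b c p q :: pt and \<sigma> :: real
  assumes sa: "sinb (\<sigma>^2) a b c" and sb: "sinb (\<sigma>^2) b a c" and sc: "sinb (\<sigma>^2) c a b"
    and sig: "0 < \<sigma>" "\<sigma> \<le> 1" and d: "a \<noteq> b" "a \<noteq> c" "b \<noteq> c"
    and p: "p \<in> open_segment a b" and q: "q \<in> open_segment a c"
  shows "Maxac_tri (pi - arccos (sqrt (1 - \<sigma>^2/4))) {a,p,q}"
    and "RDP ((1+\<sigma>)/\<sigma>^2) (pi - arccos (sqrt (1 - \<sigma>^2/4))) p b c q"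
proof -
  define m where "m = \<sigma>^2/4"
  have s1: "\<sigma>^2 \<le> 1" using sig by (simp add: power_le_one)
  have m: "0 < m" "m \<le> 1" "m \<le> \<sigma>^2" using s1 sig unfolding m_def by auto
  obtain s where s: "0 < s" "s < 1" "p = (1-s) *\<^sub>R a + s *\<^sub>R b" using p unfolding in_segment by blast
  obtain t where t: "0 < t" "t < 1" "q = (1-t) *\<^sub>R a + t *\<^sub>R c" using q unfolding in_segment by blast
  define u where "u = b - a"
  define v where "v = c - a"
  define D where "D = cr u v"
  have B: "b = a + u" and C: "c = a + v" unfolding u_def v_def by simp_all
  have P: "p = a + s *\<^sub>R u" unfolding u_def s(3) by (simp add: algebra_simps)
  have Q: "q = a + t *\<^sub>R v" unfolding v_def t(3) by (simp add: algebra_simps)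
  have cvu: "cr v u = - D" unfolding D_def by (rule cr_anti)
  have nu: "norm u > 0" "norm v > 0" using d unfolding u_def v_def by auto
  have sa': "\<sigma> * norm u * norm v \<le> \<bar>D\<bar>" using sinb_abs[OF sa] sig unfolding D_def u_def v_def by simp
  have "0 < \<sigma> * norm u * norm v" using sig nu by simp
  then have D0: "D \<noteq> 0" using sa' by auto
  have e1: "cr (p-a) (q-a) = s*t*D" by (simp add: P Q D_def cr_simps)
  have e2: "cr (p-b) (c-b) = - ((1-s)*D)" by (simp add: P B C D_def cr_simps cvu algebra_simps)
  have e3: "cr (q-c) (b-c) = (1-t)*D" by (simp add: Q B C D_def cr_simps cvu algebra_simps)
  have e4: "cr (b-p) (q-p) = (1-s)*t*D" by (simp add: P Q B D_def cr_simps cvu algebra_simps)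
  have e5: "cr (c-q) (p-q) = - (s*(1-t)*D)" by (simp add: P Q C D_def cr_simps cvu algebra_simps)
  have e6: "cr (b-p) (c-p) = (1-s)*D" by (simp add: P B C D_def cr_simps cvu algebra_simps)
  have e7: "cr (c-b) (q-b) = (1-t)*D" by (simp add: Q B C D_def cr_simps cvu algebra_simps)
  have e8: "cr (q-c) (p-c) = s*(1-t)*D" by (simp add: P Q C D_def cr_simps cvu algebra_simps)
  have e9: "cr (p-q) (b-q) = t*(1-s)*D" by (simp add: P Q B D_def cr_simps cvu algebra_simps)
  show "Maxac_tri (pi - arccos (sqrt (1 - \<sigma>^2/4))) {a,p,q}"
  proof -
    have "sinb (\<sigma>^2) a p q" using sinb_scale[OF sa, of p s q t] by (simp add: P Q B C)
    then have "sinb m a p q" using sinb_mono m by blast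
    then show ?thesis using maxac'[OF m(1,2)] e1 s t D0 unfolding m_def by simp
  qed
  have pbc: "Maxac_tri (pi - arccos (sqrt (1 - \<sigma>^2/4))) {p,b,c}"
  proof -
    have "sinb (\<sigma>^2) b p c" using sinb_scale[OF sb, of p "1-s" c 1] by (simp add: P B C algebra_simps)
    then have "sinb m b p c" using sinb_mono m by blast
    then have "Maxac_tri (pi - arccos (sqrt (1-m))) {b,p,c}" using maxac'[OF m(1,2)] e2 s D0 by simp
    then show ?thesis unfolding m_def by (simp add: insert_commute)
  qed
  have bcq: "Maxac_tri (pi - arccos (sqrt (1 - \<sigma>^2/4))) {b,c,q}"
  proof -
    have "sinb (\<sigma>^2) c q b" using sinb_scale[OF sc, of q "1-t" b 1] by (simp add: Q B C algebra_simps)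
    then have "sinb m c q b" using sinb_mono m by blast
    then have "Maxac_tri (pi - arccos (sqrt (1-m))) {c,q,b}" using maxac'[OF m(1,2)] e3 t D0 by simp
    then show ?thesis unfolding m_def by (simp add: insert_commute)
  qed
  have sapq: "sinb (\<sigma>^2) a p q" using sinb_scale[OF sa, of p s q t] by (simp add: P Q B C)
  have split: "Maxac_tri (pi - arccos (sqrt (1 - \<sigma>^2/4))) {b,q,p} \<or> Maxac_tri (pi - arccos (sqrt (1 - \<sigma>^2/4))) {p,c,q}"
  proof (cases "norm (p-a) \<le> norm (q-a)")
    case True
    have "sinb m p a q" using apex[OF sapq True] unfolding m_def by simp
    moreover have "b - p = (-(1-s)/s) *\<^sub>R (a - p)"
    proof -
      have h1: "a - p = (-s) *\<^sub>R u" by (simp add: P)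
      have h2: "b - p = (1-s) *\<^sub>R u" by (simp add: P B algebra_simps)
      have h3: "(-(1-s)/s) * (-s) = 1-s" using s(1) by (simp add: field_simps)
      show ?thesis by (simp only: h1 h2 scaleR_scaleR h3)
    qed
    ultimately have "sinb m p b q" using sinb_scale[of m p a q b "-(1-s)/s" q 1] by simp
    then have "Maxac_tri (pi - arccos (sqrt (1-m))) {p,b,q}" using maxac'[OF m(1,2)] e4 s t D0 by simp
    then show ?thesis unfolding m_def by (simp add: insert_commute)
  next
    case False
    then have "norm (q-a) \<le> norm (p-a)" by simp
    then have "sinb m q a p" using apex[OF sapq[unfolded sinb_sym[of _ a p q]]] unfolding m_def by simp
    moreover have "c - q = (-(1-t)/t) *\<^sub>R (a - q)"
    proof -
      have h1: "a - q = (-t) *\<^sub>R v" by (simp add: Q)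
      have h2: "c - q = (1-t) *\<^sub>R v" by (simp add: Q C algebra_simps)
      have h3: "(-(1-t)/t) * (-t) = 1-t" using t(1) by (simp add: field_simps)
      show ?thesis by (simp only: h1 h2 scaleR_scaleR h3)
    qed
    ultimately have "sinb m q c p" using sinb_scale[of m q a p c "-(1-t)/t" p 1] by simp
    then have "Maxac_tri (pi - arccos (sqrt (1-m))) {q,c,p}" using maxac'[OF m(1,2)] e5 s t D0 by simp
    then show ?thesis unfolding m_def by (simp add: insert_commute)
  qed
  have cq: "convex_quad p b c q"
    unfolding convex_quad_def
  proof (intro conjI)
    show "\<not> collinear {p, b, c}" using e6 s D0 by (intro ncol) simp
    show "\<not> collinear {b, c, q}" using e7 t D0 by (intro ncol) simp
    show "\<not> collinear {c, q, p}" using e8 s t D0 by (intro ncol) simp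
    show "\<not> collinear {q, p, b}" using e9 s t D0 by (intro ncol) simp
    have "cr (b-p) (c-p) \<noteq> 0" using e6 s D0 by simp
    then have pc: "p \<noteq> c" by (rule cr_distinct(2))
    have "cr (c-b) (q-b) \<noteq> 0" using e7 t D0 by simp
    then have bq: "b \<noteq> q" by (rule cr_distinct(2))
    define \<mu> where "\<mu> = (1-s)/(1-s*t)"
    have st1: "s*t < s" using s t by simp
    have st: "s*t < 1" using st1 s by linarith
    have mu1: "0 < \<mu>" using s st unfolding \<mu>_def by simp
    have "1 - s < 1 - s*t" using st1 by linarith
    then have mu2: "\<mu> < 1" using st unfolding \<mu>_def by (simp add: pos_divide_less_eq)
    note mu = mu1 mu2
    have mt: "\<mu>*t < \<mu>" using mu1 t by simp
    have mut1: "0 < \<mu>*t" using mu1 t by simp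
    have mut2: "\<mu>*t < 1" using mt mu2 by linarith
    note mut = mut1 mut2
    have k: "(1-\<mu>*t) * s = 1 - \<mu>" using st unfolding \<mu>_def by (simp add: field_simps)
    define X where "X = (1-\<mu>) *\<^sub>R b + \<mu> *\<^sub>R q"
    have X1: "X = a + (1-\<mu>) *\<^sub>R u + (\<mu>*t) *\<^sub>R v" unfolding X_def by (simp add: B Q algebra_simps)
    have X2: "(1-\<mu>*t) *\<^sub>R p + (\<mu>*t) *\<^sub>R c = a + ((1-\<mu>*t) * s) *\<^sub>R u + (\<mu>*t) *\<^sub>R v"
      by (simp add: P C algebra_simps)
    have X3: "X = (1-\<mu>*t) *\<^sub>R p + (\<mu>*t) *\<^sub>R c" unfolding X1 X2 k ..
    have "X \<in> open_segment p c" unfolding in_segment using pc mut X3 by blast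
    moreover have "X \<in> open_segment b q" unfolding in_segment using bq mu X_def by blast
    ultimately show "open_segment p c \<inter> open_segment b q \<noteq> {}" by blast
  qed
  have eb: "cr (a-b) (c-b) = - D" by (simp add: B C D_def cr_simps cvu)
  have sbq: "\<sigma> * norm (a-b) * norm (c-b) \<le> \<bar>D\<bar>"
    using sinb_abs[OF sb] sig eb by simp
  have ec: "cr (a-c) (b-c) = D" by (simp add: B C D_def cr_simps cvu)
  have scb: "\<sigma> * norm (a-c) * norm (b-c) \<le> \<bar>D\<bar>"
    using sinb_abs[OF sc] sig ec by simp
  have Dc: "\<bar>D\<bar> \<le> norm (a-c) * norm (b-c)" using cr_bound[of "a-c" "b-c"] ec by simp
  have Db: "\<bar>D\<bar> \<le> norm (a-b) * norm (c-b)" using cr_bound[of "a-b" "c-b"] eb by simp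
  have nab: "norm (a-b) = norm u" "norm (a-c) = norm v" unfolding u_def v_def by (simp_all add: norm_minus_commute)
  have nbc: "norm (c-b) > 0" "norm (b-c) = norm (c-b)" using d by (simp_all add: norm_minus_commute)
  have r1: "\<sigma> * norm u \<le> norm v"
  proof -
    have "\<sigma> * norm u * norm (c-b) \<le> norm v * norm (c-b)" using sbq Dc unfolding nab nbc(2) by linarith
    then show ?thesis using nbc by simp
  qed
  have r2: "\<sigma> * norm v \<le> norm u"
  proof -
    have "\<sigma> * norm v * norm (c-b) \<le> norm u * norm (c-b)" using scb Db unfolding nab nbc(2) by linarith
    then show ?thesis using nbc by simp
  qed
  have ep: "cr u (c-p) = D" by (simp add: P C D_def cr_simps)
  have r3: "\<sigma> * norm v \<le> norm (p-c)"
  proof -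
    have "\<bar>D\<bar> \<le> norm u * norm (c-p)" using cr_bound[of u "c-p"] ep by simp
    then have "(\<sigma> * norm v) * norm u \<le> norm (c-p) * norm u" using sa' by (simp add: algebra_simps)
    then show ?thesis using nu by (simp add: norm_minus_commute)
  qed
  have eq: "cr (q-b) v = - D" by (simp add: Q B D_def cr_simps)
  have r4: "\<sigma> * norm u \<le> norm (b-q)"
  proof -
    have "\<bar>D\<bar> \<le> norm (q-b) * norm v" using cr_bound[of "q-b" v] eq by simp
    then have "(\<sigma> * norm u) * norm v \<le> norm (q-b) * norm v" using sa' by (simp add: algebra_simps)
    then show ?thesis using nu by (simp add: norm_minus_commute)
  qed
  have r5: "norm (b-q) \<le> norm u + norm v"
  proof -
    have "b - q = u - t *\<^sub>R v" by (simp add: B Q)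
    then have "norm (b-q) \<le> norm u + norm (t *\<^sub>R v)" using norm_triangle_ineq4 by metis
    also have "norm (t *\<^sub>R v) \<le> norm v" using t mult_left_le_one_le[of "norm v" t] by simp
    finally show ?thesis by simp
  qed
  have r6: "norm (p-c) \<le> norm v + norm u"
  proof -
    have "p - c = s *\<^sub>R u - v" by (simp add: P C)
    then have "norm (p-c) \<le> norm (s *\<^sub>R u) + norm v" using norm_triangle_ineq4 by metis
    also have "norm (s *\<^sub>R u) \<le> norm u" using s mult_left_le_one_le[of "norm u" s] by simp
    finally show ?thesis by simp
  qed
  have pc0: "0 < norm (p-c)" using r3 sig nu by (smt (verit) mult_pos_pos)
  have bq0: "0 < norm (b-q)" using r4 sig nu by (smt (verit) mult_pos_pos)
  have rat1: "dist b q / dist p c \<le> (1+\<sigma>)/\<sigma>^2"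
    unfolding dist_norm by (rule ratio_lemma[OF sig(1) r1 r5 r3 pc0])
  have rat2: "dist p c / dist b q \<le> (1+\<sigma>)/\<sigma>^2"
    unfolding dist_norm by (rule ratio_lemma[OF sig(1) r2 r6 r4 bq0])
  show "RDP ((1+\<sigma>)/\<sigma>^2) (pi - arccos (sqrt (1 - \<sigma>^2/4))) p b c q"
    unfolding RDP_def using cq rat1 rat2 pbc bcq split by blast
qed

lemma card3: assumes "card {a,b,c} = 3" shows "a \<noteq> b" "a \<noteq> c" "b \<noteq> c"
  using assms by (auto simp: card_insert_if split: if_splits)

lemma tri_sinb: assumes "Minac_tri \<alpha> {a,b,c}" "card {a,b,c} = 3" "0 < \<beta>" "\<beta> \<le> \<alpha>" "\<beta> \<le> pi"
  shows "a \<noteq> b" "a \<noteq> c" "b \<noteq> c" "sinb ((sin \<beta>)^2) a b c" "sinb ((sin \<beta>)^2) b a c"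
    "sinb ((sin \<beta>)^2) c a b"
proof -
  note d = card3[OF assms(2)]
  show "a \<noteq> b" "a \<noteq> c" "b \<noteq> c" by (rule d)+
  show "sinb ((sin \<beta>)^2) a b c" using minac_sinb[OF assms(1) d assms(3-5)] .
  have "Minac_tri \<alpha> {b,a,c}" using assms(1) by (simp add: insert_commute)
  then show "sinb ((sin \<beta>)^2) b a c" using minac_sinb d assms(3-5) by metis
  have "Minac_tri \<alpha> {c,a,b}" using assms(1) by (simp add: insert_commute)
  then show "sinb ((sin \<beta>)^2) c a b" using minac_sinb d assms(3-5) by metis
qed

lemma fm_cases: assumes "K \<in> fitted_mesh \<gamma> U"
  shows "(\<exists>a b c. K = [a,b,c] \<and> {a,b,c} \<in> U) \<or>
    (\<exists>a b c p q. {a,b,c} \<in> U \<and> p \<in> open_segment a b \<and> q \<in> open_segment a c \<and> (K = [a,p,q] \<or> K = [p,b,c,q]))"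
  using assms unfolding fitted_mesh_def by blast

theorem lemma4p4:
  fixes \<alpha> :: real
  assumes "0 < \<alpha>"
  shows "\<exists>N \<psi>. 0 < \<psi> \<and> \<psi> < pi \<and>
    (\<forall>(\<Omega>::pt set) (\<gamma>::real \<Rightarrow> pt) U.
       convex_polygon \<Omega> \<and> C2_curve \<gamma> \<and> path_image \<gamma> \<subseteq> \<Omega> \<and>
       triangulation \<Omega> U \<and> Minac_mesh \<alpha> U \<and>
       (\<forall>V\<in>U. crossed \<gamma> V \<longrightarrow> cuts_two_edges \<gamma> V) \<longrightarrow>
       (\<forall>K\<in>fitted_mesh \<gamma> U.
          (\<forall>a b c. K = [a, b, c] \<longrightarrow> Maxac_tri \<psi> {a, b, c}) \<and>
          (\<forall>a b c d. K = [a, b, c, d] \<longrightarrow> RDP N \<psi> a b c d)))"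
proof -
  define \<beta> where "\<beta> = min \<alpha> 1"
  define \<sigma> where "\<sigma> = sin \<beta>"
  have \<beta>: "0 < \<beta>" "\<beta> \<le> \<alpha>" "\<beta> \<le> pi" "\<beta> < pi" using assms pi_gt3 by (auto simp: \<beta>_def)
  have sig: "0 < \<sigma>" "\<sigma> \<le> 1" unfolding \<sigma>_def using \<beta> by (auto intro: sin_gt_zero)
  have s1: "\<sigma>^2 \<le> 1" using sig by (simp add: power_le_one)
  define m where "m = \<sigma>^2/4"
  have m: "0 < m" "m \<le> 1" "m \<le> \<sigma>^2" using s1 sig unfolding m_def by auto
  define r where "r = sqrt (1 - m)"
  have r: "0 \<le> r" "r < 1" using m unfolding r_def by auto
  have ar1: "arccos r \<le> pi/2" using r by (intro arccos_le_pi2) auto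
  have "arccos 1 < arccos r" using r by (intro arccos_less_arccos) auto
  then have ar2: "0 < arccos r" by simp
  define \<psi> where "\<psi> = pi - arccos (sqrt (1 - \<sigma>^2/4))"
  have \<psi>: "0 < \<psi>" "\<psi> < pi" using ar1 ar2 pi_gt_zero unfolding \<psi>_def r_def m_def by linarith+
  show ?thesis
  proof (rule exI[of _ "(1+\<sigma>)/\<sigma>^2"], rule exI[of _ \<psi>], rule conjI[OF \<psi>(1)], rule conjI[OF \<psi>(2)],
      (rule allI)+, rule impI, rule ballI)
    fix \<Omega> :: "pt set" and \<gamma> :: "real \<Rightarrow> pt" and U K
    assume H: "convex_polygon \<Omega> \<and> C2_curve \<gamma> \<and> path_image \<gamma> \<subseteq> \<Omega> \<and>
       Defs.triangulation \<Omega> U \<and> Minac_mesh \<alpha> U \<and> (\<forall>V\<in>U. crossed \<gamma> V \<longrightarrow> cuts_two_edges \<gamma> V)"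
      and K: "K \<in> fitted_mesh \<gamma> U"
    have tri: "Defs.triangulation \<Omega> U" "Minac_mesh \<alpha> U" using H by auto
    have U1: "\<forall>V\<in>U. nondeg_tri V" using tri(1) unfolding Defs.triangulation_def by blast
    have U2: "\<forall>V\<in>U. Minac_tri \<alpha> V" using tri(2) unfolding Minac_mesh_def by blast
    have TU1: "Minac_tri \<alpha> {a,b,c}" and TU2: "card {a,b,c} = 3" if "{a,b,c} \<in> U" for a b c
      using U1 U2 that unfolding nondeg_tri_def by blast+
    have facts: "a \<noteq> b" "a \<noteq> c" "b \<noteq> c" "sinb (\<sigma>^2) a b c" "sinb (\<sigma>^2) b a c" "sinb (\<sigma>^2) c a b"
      if "{a,b,c} \<in> U" for a b c
      using tri_sinb[OF TU1[OF that] TU2[OF that] \<beta>(1,2,3)] unfolding \<sigma>_def by blast+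
    from fm_cases[OF K]
    show "(\<forall>a b c. K = [a, b, c] \<longrightarrow> Maxac_tri \<psi> {a, b, c}) \<and>
          (\<forall>a b c d. K = [a, b, c, d] \<longrightarrow> RDP ((1+\<sigma>)/\<sigma>^2) \<psi> a b c d)"
    proof (elim disjE exE conjE)
      fix a b c assume k: "K = [a,b,c]" and V: "{a,b,c} \<in> U"
      note f = facts[OF V]
      have "sinb m a b c" using sinb_mono[OF m(3) f(4)] .
      then have "Maxac_tri (pi - arccos (sqrt (1-m))) {a,b,c}" using maxac[OF m(1,2) _ f(1,2,3)] by blast
      then show ?thesis using k unfolding \<psi>_def m_def by simp
    next
      fix a b c p q assume V: "{a,b,c} \<in> U" and p: "p \<in> open_segment a b" and q: "q \<in> open_segment a c"
        and k: "K = [a,p,q]"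
      note f = facts[OF V]
      have g1: "Maxac_tri \<psi> {a,p,q}"
        using geo[OF f(4,5,6) sig f(1,2,3) p q] unfolding \<psi>_def by blast+
      then show ?thesis using k by simp
    next
      fix a b c p q assume V: "{a,b,c} \<in> U" and p: "p \<in> open_segment a b" and q: "q \<in> open_segment a c"
        and k: "K = [p,b,c,q]"
      note f = facts[OF V]
      have g2: "RDP ((1+\<sigma>)/\<sigma>^2) \<psi> p b c q"
        using geo[OF f(4,5,6) sig f(1,2,3) p q] unfolding \<psi>_def by blast+
      then show ?thesis using k by simp
    qed
  qed
qed

end
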